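(* For any way of choosing the element $t$ at each step, the Positivity Algorithm terminates and the set $S$ it returns contains an index $i\in\{1,\dots,n\}$ if and only if there exists a positivity-showing sequence for $i$.
   Context: Inequalities between vectors are componentwise. An M-matrix is a matrix $sI-P$ with $P\geq0$ entrywise and $s\geq\rho(P)$ ($\rho$ = spectral radius). Let $M\in\mathbb R^{n\times n}$ be a nonsingular M-matrix, $a\in\mathbb R^n$ with $a\geq 0$, and $b:\mathbb R^n\times\mathbb R^n\to\mathbb R^n$ a bilinear map with $b(x,y)\geq 0$ whenever $x,y\geq 0$. Let $(M^{-1}B)_{rst}$ denote the tensor of $(x,y)\mapsto M^{-1}b(x,y)$, i.e. $(M^{-1}b(x,y))_t=\sum_{r,s}(M^{-1}B)_{rst}x_r y_s$. Let $e_t$ be the $t$-th canonical basis vector and $e_S=\sum_{s\in S}e_s$. A finite sequence $S_1,\dots,S_N$ of subsets of $\{1,\dots,n\}$ is positivity-showing for $i$ if: (i) $S_1=\{h:(M^{-1}a)_h>0\}$; (ii) $S_h\subseteq S_{h+1}$ for each $h$; (iii) for each $h$ and each $t\in S_{h+1}\setminus S_h$ there exist $r,s\in S_h$ (possibly $r=s$) with $(M^{-1}B)_{rst}>0$; (iv) $i\in S_N$. Positivity Algorithm: initialize $S=T=\{i:(M^{-1}a)_i>0\}$. While $T\neq\emptyset$ and $S\neq\{1,\dots,n\}$: choose any $t\in T$, remove $t$ from $T$, compute $u=M^{-1}\big(b(e_S,e_t)+b(e_t,e_S)\big)$ with the current $S$, and for every $i\notin S$ with $u_i>0$ add $i$ to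 both $S$ and $T$. Return $S$. *)

theory Defs
  imports "HOL-Analysis.Analysis"
begin

text \<open>Matrices are n x n real matrices indexed by a finite type 'n (so {1..n} = UNIV).\<close>

definition cmat :: "real^'n^'n \<Rightarrow> complex^'n^'n" where
  "cmat P = (\<chi> i j. complex_of_real (P $ i $ j))"

definition is_eigenvalue :: "real^'n^'n \<Rightarrow> complex \<Rightarrow> bool" where
  "is_eigenvalue P c \<longleftrightarrow> (\<exists>v::complex^'n. v \<noteq> 0 \<and> cmat P *v v = c *s v)"

definition spectral_radius :: "real^'n^'n \<Rightarrow> real" where
  "spectral_radius P = Max (cmod ` {c. is_eigenvalue P c})"

definition nonneg_mat :: "real^'n^'n \<Rightarrow> bool" where
  "nonneg_mat P \<longleftrightarrow> (\<forall>i j. P $ i $ j \<ge> 0)"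

definition nonneg_vec :: "real^'n \<Rightarrow> bool" where
  "nonneg_vec x \<longleftrightarrow> (\<forall>i. x $ i \<ge> 0)"

definition M_matrix :: "real^'n^'n \<Rightarrow> bool" where
  "M_matrix M \<longleftrightarrow> (\<exists>s P. nonneg_mat P \<and> M = s *\<^sub>R mat 1 - P \<and> s \<ge> spectral_radius P)"

definition nonsingular_M_matrix :: "real^'n^'n \<Rightarrow> bool" where
  "nonsingular_M_matrix M \<longleftrightarrow> M_matrix M \<and> invertible M"

definition ind_vec :: "'n set \<Rightarrow> real^'n" where
  "ind_vec S = (\<chi> i. if i \<in> S then 1 else 0)"

definition MB_tensor :: "real^'n^'n \<Rightarrow> (real^'n \<Rightarrow> real^'n \<Rightarrow> real^'n) \<Rightarrow> 'n \<Rightarrow> 'n \<Rightarrow> 'n \<Rightarrow> real" where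
  "MB_tensor M b r s t = (matrix_inv M *v b (axis r 1) (axis s 1)) $ t"

definition init_set :: "real^'n^'n \<Rightarrow> real^'n \<Rightarrow> 'n set" where
  "init_set M a = {h. (matrix_inv M *v a) $ h > 0}"

text \<open>Positivity-showing sequence S_1..S_N, given as a nonempty list (Ss ! 0 = S_1).\<close>
definition positivity_showing ::
  "real^'n^'n \<Rightarrow> real^'n \<Rightarrow> (real^'n \<Rightarrow> real^'n \<Rightarrow> real^'n) \<Rightarrow> 'n \<Rightarrow> 'n set list \<Rightarrow> bool" where
  "positivity_showing M a b i Ss \<longleftrightarrow>
     Ss \<noteq> [] \<and>
     Ss ! 0 = init_set M a \<and>
     (\<forall>h. Suc h < length Ss \<longrightarrow> Ss ! h \<subseteq> Ss ! Suc h) \<and>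
     (\<forall>h. Suc h < length Ss \<longrightarrow>
        (\<forall>t \<in> Ss ! Suc h - Ss ! h. \<exists>r \<in> Ss ! h. \<exists>s \<in> Ss ! h. MB_tensor M b r s t > 0)) \<and>
     i \<in> last Ss"

text \<open>Positivity Algorithm as a nondeterministic transition system on states (S, T).
  One step = one iteration of the while loop, with any choice of t in T.\<close>
definition pos_step ::
  "real^'n^'n \<Rightarrow> (real^'n \<Rightarrow> real^'n \<Rightarrow> real^'n) \<Rightarrow> 'n set \<times> 'n set \<Rightarrow> 'n set \<times> 'n set \<Rightarrow> bool" where
  "pos_step M b st st' \<longleftrightarrow>
     (let S = fst st; T = snd st in
      T \<noteq> {} \<and> S \<noteq> UNIV \<and>
      (\<exists>t \<in> T.
         let u = matrix_inv M *v (b (ind_vec S) (axis t 1) + b (axis t 1) (ind_vec S));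
             N = {i. i \<notin> S \<and> u $ i > 0}
         in st' = (S \<union> N, (T - {t}) \<union> N)))"

definition pos_halted :: "'n set \<times> 'n set \<Rightarrow> bool" where
  "pos_halted st \<longleftrightarrow> snd st = {} \<or> fst st = UNIV"

end

theory Submission
  imports Defs "HOL-Computational_Algebra.Polynomial"
begin


lemma minv: fixes A :: "real^'n^'n" assumes "invertible A"
  shows "A ** matrix_inv A = mat 1" "matrix_inv A ** A = mat 1"
  using someI_ex[OF assms[unfolded invertible_def]] unfolding matrix_inv_def by auto

definition maxv :: "real^'n \<Rightarrow> real" where "maxv v = Max (range (\<lambda>i. \<bar>v$i\<bar>))"

lemma maxv_ge: "\<bar>v$i\<bar> \<le> maxv v" unfolding maxv_def by (rule Max_ge) auto
lemma maxv_attained: "\<exists>i. maxv v = \<bar>v$i\<bar>"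
proof -
  have "maxv v \<in> range (\<lambda>i. \<bar>v$i\<bar>)" unfolding maxv_def by (rule Max_in) auto
  thus ?thesis by auto
qed
lemma maxv_nonneg: "0 \<le> maxv v" using maxv_ge[of v] by (meson abs_ge_zero order_trans)
lemma maxv_le: "(\<And>i. \<bar>v$i\<bar> \<le> c) \<Longrightarrow> maxv v \<le> c" using maxv_attained[of v] by metis
lemma maxv_zero: "maxv v \<le> 0 \<Longrightarrow> v = 0"
  using maxv_ge[of v] by (metis abs_le_zero_iff order_trans vec_eq_iff zero_index)

lemma maxv_mult_bound: fixes A :: "real^'n^'m" shows "\<exists>C\<ge>0. \<forall>v. maxv (A *v v) \<le> C * maxv v"
proof (intro exI[of _ "\<Sum>i\<in>UNIV. \<Sum>j\<in>UNIV. \<bar>A$i$j\<bar>"] conjI allI)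
  show "0 \<le> (\<Sum>i\<in>UNIV. \<Sum>j\<in>UNIV. \<bar>A$i$j\<bar>)" by (intro sum_nonneg) auto
  fix v
  show "maxv (A *v v) \<le> (\<Sum>i\<in>UNIV. \<Sum>j\<in>UNIV. \<bar>A$i$j\<bar>) * maxv v"
  proof (rule maxv_le)
    fix i
    have "\<bar>(A *v v)$i\<bar> = \<bar>\<Sum>j\<in>UNIV. A$i$j * v$j\<bar>" by (simp add: matrix_vector_mult_def)
    also have "\<dots> \<le> (\<Sum>j\<in>UNIV. \<bar>A$i$j\<bar> * \<bar>v$j\<bar>)"
      by (metis (no_types, lifting) abs_mult sum.cong sum_abs)
    also have "\<dots> \<le> (\<Sum>j\<in>UNIV. \<bar>A$i$j\<bar> * maxv v)"
      by (intro sum_mono mult_left_mono maxv_ge) auto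
    also have "\<dots> = (\<Sum>j\<in>UNIV. \<bar>A$i$j\<bar>) * maxv v" by (simp add: sum_distrib_right)
    also have "\<dots> \<le> (\<Sum>i\<in>UNIV. \<Sum>j\<in>UNIV. \<bar>A$i$j\<bar>) * maxv v"
      by (intro mult_right_mono maxv_nonneg member_le_sum[where f="\<lambda>i. \<Sum>j\<in>UNIV. \<bar>A$i$j\<bar>"]) (auto intro: sum_nonneg)
    finally show "\<bar>(A *v v)$i\<bar> \<le> (\<Sum>i\<in>UNIV. \<Sum>j\<in>UNIV. \<bar>A$i$j\<bar>) * maxv v" .
  qed
qed

definition pres :: "real^'n^'n \<Rightarrow> bool" where
  "pres R \<longleftrightarrow> (\<forall>x. nonneg_vec x \<longrightarrow> nonneg_vec (R *v x))"

definition onev :: "real^'n" where "onev = (\<chi> i. 1)"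

lemma core:
  fixes R :: "real^'n^'n" and z :: "real^'n"
  assumes R: "pres R" and z: "nonneg_vec z" and le: "\<And>i. z$i \<le> d * (R *v z)$i"
    and d: "d \<ge> 0" and dK: "d * maxv (R *v onev) < 1"
  shows "z = 0"
proof -
  let ?m = "maxv z"
  have "nonneg_vec (?m *\<^sub>R onev - z)" unfolding nonneg_vec_def onev_def
    using maxv_ge[of z] z unfolding nonneg_vec_def by auto
  hence "nonneg_vec (R *v (?m *\<^sub>R onev - z))" using R unfolding pres_def by blast
  hence Rz: "(R *v z)$i \<le> ?m * (R *v onev)$i" for i
    unfolding nonneg_vec_def by (auto simp: matrix_vector_mult_diff_distrib matrix_vector_mult_scaleR)
  have "z$i \<le> d * ?m * maxv (R *v onev)" for i
  proof -
    have "z$i \<le> d * (R *v z)$i" by (rule le)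
    also have "\<dots> \<le> d * (?m * (R *v onev)$i)" using Rz d by (simp add: mult_left_mono)
    also have "\<dots> \<le> d * (?m * maxv (R *v onev))"
      using maxv_ge[of "R *v onev" i] d maxv_nonneg[of z]
      by (intro mult_left_mono) (auto intro: order_trans[OF abs_ge_self])
    finally show ?thesis by simp
  qed
  moreover obtain j where j: "?m = \<bar>z$j\<bar>" using maxv_attained by blast
  ultimately have "?m \<le> d * maxv (R *v onev) * ?m" using z unfolding nonneg_vec_def
    by (metis abs_of_nonneg mult.commute mult.left_commute)
  hence "?m * (1 - d * maxv (R *v onev)) \<le> 0" by (simp add: algebra_simps)
  hence "?m \<le> 0" using dK by (simp add: mult_le_0_iff)
  thus ?thesis by (rule maxv_zero)
qed

lemma negpart:
  fixes R :: "real^'n^'n" and y a :: "real^'n"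
  assumes R: "pres R" and a: "nonneg_vec a" and y: "y = a + d *\<^sub>R (R *v y)"
    and d: "d \<ge> 0" and dK: "d * maxv (R *v onev) < 1"
  shows "nonneg_vec y"
proof -
  define p where "p = (\<chi> i. max (y$i) 0)"
  define z where "z = (\<chi> i. max (- y$i) 0)"
  have ypz: "y = p - z" unfolding p_def z_def by (auto simp: vec_eq_iff max_def)
  have pn: "nonneg_vec p" "nonneg_vec z" unfolding p_def z_def nonneg_vec_def by auto
  have Rp: "nonneg_vec (R *v p)" and Rz: "nonneg_vec (R *v z)" using R pn unfolding pres_def by auto
  have "z$i \<le> d * (R *v z)$i" for i
  proof (cases "y$i < 0")
    case True
    have "y$i = a$i + d * (R *v p)$i - d * (R *v z)$i"
      using arg_cong[OF y, of "\<lambda>v. v$i"] unfolding ypz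
      by (simp add: matrix_vector_mult_diff_distrib algebra_simps)
    moreover have "z$i = - y$i" using True unfolding z_def by simp
    moreover have "0 \<le> a$i" "0 \<le> d * (R *v p)$i" using a Rp d unfolding nonneg_vec_def by auto
    ultimately show ?thesis by linarith
  next
    case False
    hence "z$i = 0" unfolding z_def by simp
    thus ?thesis using Rz d unfolding nonneg_vec_def by simp
  qed
  hence "z = 0" using core[OF R pn(2) _ d dK] by blast
  thus ?thesis using ypz pn unfolding nonneg_vec_def by simp
qed



lemma eig_bound:
  fixes P :: "real^'n^'n"
  assumes "is_eigenvalue P c"
  shows "cmod c \<le> (\<Sum>i\<in>UNIV. \<Sum>j\<in>UNIV. \<bar>P$i$j\<bar>)"
proof -
  obtain v where v0: "v \<noteq> 0" and ev: "cmat P *v v = c *s v" using assms unfolding is_eigenvalue_def by auto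
  define m where "m = Max (range (\<lambda>i. cmod (v$i)))"
  have "m \<in> range (\<lambda>i. cmod (v$i))" unfolding m_def by (rule Max_in) auto
  then obtain i where i: "m = cmod (v$i)" by auto
  have mge: "cmod (v$j) \<le> m" for j unfolding m_def by (rule Max_ge) auto
  have "m > 0"
  proof (rule ccontr)
    assume "\<not> m > 0"
    hence "cmod (v$j) = 0" for j using mge[of j] by (meson norm_ge_zero order.antisym not_less order_trans)
    hence "v = 0" by (simp add: vec_eq_iff)
    thus False using v0 by simp
  qed
  have "c * v$i = (\<Sum>j\<in>UNIV. cmat P$i$j * v$j)"
    using arg_cong[OF ev, of "\<lambda>x. x$i"] by (simp add: matrix_vector_mult_def)
  hence "cmod c * m = cmod (\<Sum>j\<in>UNIV. cmat P$i$j * v$j)" using i by (metis norm_mult)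
  also have "\<dots> \<le> (\<Sum>j\<in>UNIV. \<bar>P$i$j\<bar> * cmod (v$j))"
    by (rule order_trans[OF norm_sum]) (simp add: cmat_def norm_mult)
  also have "\<dots> \<le> (\<Sum>j\<in>UNIV. \<bar>P$i$j\<bar> * m)" by (intro sum_mono mult_left_mono mge) auto
  also have "\<dots> = (\<Sum>j\<in>UNIV. \<bar>P$i$j\<bar>) * m" by (simp add: sum_distrib_right)
  also have "\<dots> \<le> (\<Sum>i\<in>UNIV. \<Sum>j\<in>UNIV. \<bar>P$i$j\<bar>) * m"
    using \<open>m > 0\<close>
    by (intro mult_right_mono member_le_sum[where f="\<lambda>i. \<Sum>j\<in>UNIV. \<bar>P$i$j\<bar>"]) (auto intro: sum_nonneg)
  finally show ?thesis using \<open>m > 0\<close> by simp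
qed

definition shiftm :: "real^'n^'n \<Rightarrow> complex \<Rightarrow> complex^'n^'n" where
  "shiftm P c = (\<chi> i j. cmat P$i$j - (if i = j then c else 0))"

lemma eig_iff_ker: "is_eigenvalue P c \<longleftrightarrow> (\<exists>v. v \<noteq> 0 \<and> shiftm P c *v v = 0)"
proof -
  have "shiftm P c *v v = cmat P *v v - c *s v" for v
    by (simp add: vec_eq_iff shiftm_def matrix_vector_mult_def sum_subtractf left_diff_distrib
        if_distrib[where f="\<lambda>x. x * _"] cong: if_cong)
  thus ?thesis unfolding is_eigenvalue_def by (metis eq_iff_diff_eq_0)
qed

lemma eig_iff_det: "is_eigenvalue P c \<longleftrightarrow> det (shiftm P c) = 0"
  using eig_iff_ker[of P c] invertible_det_nz[of "shiftm P c"] invertible_left_inverse[of "shiftm P c"]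
    matrix_left_invertible_ker[of "shiftm P c"] by blast

lemma fin_eig: fixes P :: "real^'n^'n" shows "finite {c. is_eigenvalue P c}"
proof -
  define q where "q = (\<Sum>p\<in>{p. p permutes (UNIV::'n set)}. of_int (sign p) *
     (\<Prod>i\<in>UNIV. [: cmat P $ i $ p i, - (if i = p i then 1 else 0) :]))"
  have pq: "poly q c = det (shiftm P c)" for c
    unfolding q_def det_def poly_sum poly_prod
    by (intro sum.cong refl) (simp add: poly_prod shiftm_def; intro prod.cong; auto)
  define N where "N = (\<Sum>i\<in>UNIV. \<Sum>j\<in>UNIV. \<bar>P$i$j\<bar>)"
  have "\<not> is_eigenvalue P (of_real (\<bar>N\<bar> + 1))"
    using eig_bound[of P "of_real (\<bar>N\<bar> + 1)"] unfolding N_def by auto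
  hence "q \<noteq> 0" using pq eig_iff_det by fastforce
  hence "finite {c. poly q c = 0}" by (rule poly_roots_finite)
  moreover have "{c. is_eigenvalue P c} \<subseteq> {c. poly q c = 0}" using pq eig_iff_det by auto
  ultimately show ?thesis by (rule finite_subset[rotated])
qed

lemma gt_sr_invertible:
  fixes P :: "real^'n^'n"
  assumes "t > spectral_radius P"
  shows "invertible (t *\<^sub>R mat 1 - P)"
proof (rule ccontr)
  assume "\<not> invertible (t *\<^sub>R mat 1 - P)"
  then obtain v where v0: "v \<noteq> 0" and vk: "(t *\<^sub>R mat 1 - P) *v v = 0"
    unfolding invertible_left_inverse matrix_left_invertible_ker by blast
  define w where "w = (\<chi> i. complex_of_real (v$i))"
  have "w \<noteq> 0" using v0 unfolding w_def by (auto simp: vec_eq_iff)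
  have Pv: "(P *v v)$i = t * v$i" for i
    using arg_cong[OF vk, of "\<lambda>x. x$i"]
    by (simp add: matrix_vector_mult_diff_rdistrib scaleR_matrix_vector_assoc[symmetric])
  have "(cmat P *v w)$i = (of_real t *s w)$i" for i
  proof -
    have "(cmat P *v w)$i = of_real ((P *v v)$i)"
      by (simp add: cmat_def w_def matrix_vector_mult_def)
    thus ?thesis using Pv by (simp add: w_def)
  qed
  hence "is_eigenvalue P (of_real t)" unfolding is_eigenvalue_def using \<open>w \<noteq> 0\<close>
    by (auto simp: vec_eq_iff)
  hence "\<bar>t\<bar> \<le> spectral_radius P" unfolding spectral_radius_def
    using fin_eig[of P] by (metis Max_ge finite_imageI image_eqI mem_Collect_eq norm_of_real)
  thus False using assms by linarith
qed



lemma solve_inv: fixes A :: "real^'n^'n"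
  assumes "invertible A" "A *v y = x" shows "y = matrix_inv A *v x"
  using minv(2)[OF assms(1)] assms(2) by (metis matrix_vector_mul_assoc matrix_vector_mul_lid)

lemma shift_eq: fixes P :: "real^'n^'n" shows "(t *\<^sub>R mat 1 - P) *v y = t *\<^sub>R y - P *v y"
  by (simp add: matrix_vector_mult_diff_rdistrib scaleR_matrix_vector_assoc[symmetric])

lemma nonneg_pres: "nonneg_mat P \<Longrightarrow> pres P"
  unfolding pres_def nonneg_mat_def nonneg_vec_def
  by (auto simp: matrix_vector_mult_def intro!: sum_nonneg)

lemma onev_nonneg: "nonneg_vec onev" unfolding onev_def nonneg_vec_def by simp
lemma maxv_onev: "maxv onev \<le> 1" by (rule maxv_le) (simp add: onev_def)

lemma maxv_diff: "maxv (a - d *\<^sub>R b) \<le> maxv a + \<bar>d\<bar> * maxv b"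
proof (rule maxv_le)
  fix i
  have "\<bar>(a - d *\<^sub>R b)$i\<bar> \<le> \<bar>a$i\<bar> + \<bar>d\<bar> * \<bar>b$i\<bar>" using abs_triangle_ineq4[of "a$i" "d * b$i"] by (simp add: abs_mult)
  also have "\<dots> \<le> maxv a + \<bar>d\<bar> * maxv b" by (intro add_mono mult_left_mono maxv_ge) auto
  finally show "\<bar>(a - d *\<^sub>R b)$i\<bar> \<le> maxv a + \<bar>d\<bar> * maxv b" .
qed

lemma inv_nonneg:
  fixes M :: "real^'n^'n"
  assumes "nonsingular_M_matrix M"
  shows "pres (matrix_inv M)"
proof -
  obtain s P where P: "nonneg_mat P" and M: "M = s *\<^sub>R mat 1 - P" and s: "s \<ge> spectral_radius P"
    using assms unfolding nonsingular_M_matrix_def M_matrix_def by blast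
  have Minv: "invertible M" using assms unfolding nonsingular_M_matrix_def by blast
  define R where "R t = matrix_inv (t *\<^sub>R mat 1 - P)" for t
  have inv: "invertible (t *\<^sub>R mat 1 - P)" if "t \<ge> s" for t
  proof (cases "t = s")
    case True thus ?thesis using Minv M by simp
  next
    case False thus ?thesis using that s gt_sr_invertible[of P t] by simp
  qed
  have solve: "y = R t *v x" if "t \<ge> s" "t *\<^sub>R y - P *v y = x" for t y x
  proof -
    have "(t *\<^sub>R mat 1 - P) *v y = x" using that(2) by (simp add: shift_eq)
    thus ?thesis unfolding R_def by (rule solve_inv[OF inv[OF that(1)]])
  qed
  have bk: "t *\<^sub>R (R t *v x) - P *v (R t *v x) = x" if "t \<ge> s" for t x
  proof -
    have "(t *\<^sub>R mat 1 - P) *v (R t *v x) = x" unfolding R_def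
      by (simp add: matrix_vector_mul_assoc minv(1)[OF inv[OF that]])
    thus ?thesis by (simp add: shift_eq)
  qed
  have Ppres: "pres P" using P by (rule nonneg_pres)
  define T where "T = {t. s \<le> t \<and> (\<forall>u\<ge>t. pres (R u))}"
  define L where "L = \<bar>s\<bar> + maxv (P *v onev) + 1"
  have LT: "L \<in> T" unfolding T_def
  proof (safe)
    show "s \<le> L" unfolding L_def using maxv_nonneg[of "P *v onev"] by linarith
    fix u assume u: "L \<le> u"
    have us: "s \<le> u" and upos: "u > 0" and ubig: "u > maxv (P *v onev)"
      using u maxv_nonneg[of "P *v onev"] unfolding L_def by linarith+
    show "pres (R u)" unfolding pres_def
    proof (intro allI impI)
      fix x :: "real^'n" assume x: "nonneg_vec x"
      define y where "y = R u *v x"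
      have e: "u *\<^sub>R y - P *v y = x" unfolding y_def by (rule bk[OF us])
      have yeq: "y = (1/u) *\<^sub>R x + (1/u) *\<^sub>R (P *v y)"
      proof -
        have "u *\<^sub>R y = x + P *v y" using e by (simp add: algebra_simps)
        hence "(1/u) *\<^sub>R (u *\<^sub>R y) = (1/u) *\<^sub>R (x + P *v y)" by simp
        thus ?thesis using upos by (simp add: scaleR_add_right)
      qed
      have xn: "nonneg_vec ((1/u) *\<^sub>R x)" using x upos unfolding nonneg_vec_def by simp
      have uK: "(1/u) * maxv (P *v onev) < 1" using upos ubig by (simp add: field_simps)
      have "nonneg_vec y" by (rule negpart[OF Ppres xn yeq _ uK]) (use upos in simp)
      thus "nonneg_vec (R u *v x)" unfolding y_def .
    qed
  qed
  have Tne: "T \<noteq> {}" using LT by blast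
  have Tbdd: "bdd_below T" unfolding T_def by (rule bdd_belowI[of _ s]) simp
  define t0 where "t0 = Inf T"
  have t0s: "s \<le> t0" unfolding t0_def using Tne by (intro cInf_greatest) (auto simp: T_def)
  have A: "pres (R u)" if "u > t0" for u
  proof -
    have "Inf T < u" using that unfolding t0_def .
    then obtain t where "t \<in> T" "t < u" using cInf_less_iff[OF Tne Tbdd] by auto
    thus ?thesis unfolding T_def using that by auto
  qed
  obtain C where C0: "C \<ge> 0" and C: "\<And>v. maxv (R t0 *v v) \<le> C * maxv v"
    using maxv_mult_bound[of "R t0"] by blast
  have B: "pres (R t0)"
  proof -
    define d where "d = 1 / (4*C + 4)"
    have d0: "d > 0" and dC: "d * C \<le> 1/4" unfolding d_def using C0 by (auto simp: field_simps)
    define u where "u = t0 + d"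
    have ut: "u > t0" "u \<ge> s" unfolding u_def using d0 t0s by auto
    have Ru: "pres (R u)" using A ut by blast
    define w where "w = R u *v onev"
    have w0: "nonneg_vec w" using Ru onev_nonneg unfolding w_def pres_def by blast
    have "u *\<^sub>R w - P *v w = onev" unfolding w_def by (rule bk[OF ut(2)])
    hence "t0 *\<^sub>R w - P *v w = onev - d *\<^sub>R w" unfolding u_def by (simp add: algebra_simps)
    hence weq: "w = R t0 *v (onev - d *\<^sub>R w)" using solve t0s by blast
    have "maxv w \<le> C * maxv (onev - d *\<^sub>R w)" using C[of "onev - d *\<^sub>R w"] unfolding weq[symmetric] .
    also have "\<dots> \<le> C * (1 + d * maxv w)"
    proof -
      have "maxv (onev - d *\<^sub>R w) \<le> 1 + d * maxv w"
        using maxv_diff[of onev d w] maxv_onev[where 'a='n] d0 by simp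
      thus ?thesis using C0 by (rule mult_left_mono)
    qed
    finally have mw: "maxv w \<le> C + (d * C) * maxv w" by (simp add: algebra_simps)
    have "d * maxv w \<le> d * C + (d * C) * (d * maxv w)"
      using mult_left_mono[OF mw, of d] d0 by (simp add: algebra_simps)
    also have "\<dots> \<le> 1/4 + 1/4 * (d * maxv w)"
      using dC d0 maxv_nonneg[of w] by (intro add_mono mult_right_mono) auto
    finally have dK: "d * maxv (R u *v onev) < 1" unfolding w_def[symmetric] by linarith
    show ?thesis unfolding pres_def
    proof (intro allI impI)
      fix x :: "real^'n" assume x: "nonneg_vec x"
      define y where "y = R t0 *v x"
      have "t0 *\<^sub>R y - P *v y = x" unfolding y_def by (rule bk[OF t0s])
      hence "u *\<^sub>R y - P *v y = x + d *\<^sub>R y" unfolding u_def by (simp add: algebra_simps)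
      hence y1: "y = R u *v (x + d *\<^sub>R y)" using solve ut by blast
      have y2: "R u *v (x + d *\<^sub>R y) = R u *v x + d *\<^sub>R (R u *v y)"
        by (simp add: matrix_vector_right_distrib matrix_vector_mult_scaleR)
      have yeq: "y = R u *v x + d *\<^sub>R (R u *v y)" using y1 y2 by (rule trans)
      have xn: "nonneg_vec (R u *v x)" using Ru x unfolding pres_def by blast
      have "nonneg_vec y" by (rule negpart[OF Ru xn yeq _ dK]) (use d0 in simp)
      thus "nonneg_vec (R t0 *v x)" unfolding y_def .
    qed
  qed
  have "t0 = s"
  proof (rule ccontr)
    assume "t0 \<noteq> s"
    hence gt: "t0 > s" using t0s by simp
    define K where "K = maxv (R t0 *v onev)"
    define d where "d = min (t0 - s) (1 / (2 * (\<bar>K\<bar> + 1)))"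
    have d0: "d > 0" using gt unfolding d_def by auto
    have dK: "d * \<bar>K\<bar> < 1"
    proof -
      have "d * \<bar>K\<bar> \<le> (1 / (2 * (\<bar>K\<bar> + 1))) * \<bar>K\<bar>"
        unfolding d_def by (intro mult_right_mono) auto
      also have "\<dots> < 1" by (simp add: field_simps)
      finally show ?thesis .
    qed
    define u where "u = t0 - d"
    have "u \<in> T" unfolding T_def
    proof (safe)
      show "s \<le> u" unfolding u_def d_def by linarith
      fix u' assume u': "u \<le> u'"
      show "pres (R u')"
      proof (cases "u' > t0")
        case True thus ?thesis using A by blast
      next
        case False
        define d' where "d' = t0 - u'"
        have d'0: "d' \<ge> 0" "d' \<le> d" using False u' unfolding d'_def u_def by auto
        have u's: "s \<le> u'" using u' unfolding u_def d_def by linarith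
        have dK': "d' * K < 1"
        proof -
          have "d' * K \<le> d * \<bar>K\<bar>" using d'0 maxv_nonneg[of "R t0 *v onev"] unfolding K_def by (intro mult_mono) auto
          thus ?thesis using dK by linarith
        qed
        show ?thesis unfolding pres_def
        proof (intro allI impI)
          fix x :: "real^'n" assume x: "nonneg_vec x"
          define y where "y = R u' *v x"
          have "u' *\<^sub>R y - P *v y = x" unfolding y_def by (rule bk[OF u's])
          hence "t0 *\<^sub>R y - P *v y = x + d' *\<^sub>R y" unfolding d'_def by (simp add: algebra_simps)
          hence y1: "y = R t0 *v (x + d' *\<^sub>R y)" using solve t0s by blast
          have y2: "R t0 *v (x + d' *\<^sub>R y) = R t0 *v x + d' *\<^sub>R (R t0 *v y)"
            by (simp add: matrix_vector_right_distrib matrix_vector_mult_scaleR)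
          have yeq: "y = R t0 *v x + d' *\<^sub>R (R t0 *v y)" using y1 y2 by (rule trans)
          have xn: "nonneg_vec (R t0 *v x)" using B x unfolding pres_def by blast
          have "nonneg_vec y" by (rule negpart[OF B xn yeq d'0(1)]) (use dK' in \<open>simp add: K_def\<close>)
          thus "nonneg_vec (R u' *v x)" unfolding y_def .
        qed
      qed
    qed
    hence "t0 \<le> u" unfolding t0_def using Tbdd by (rule cInf_lower)
    thus False using d0 unfolding u_def by simp
  qed
  thus ?thesis using B M unfolding R_def by simp
qed



lemma bl_sum_l: "finite S \<Longrightarrow> bilinear h \<Longrightarrow> h (\<Sum>s\<in>S. f s) y = (\<Sum>s\<in>S. h (f s) y)"
  by (induction S rule: finite_induct) (auto simp: bilinear_ladd bilinear_lzero)
lemma bl_sum_r: "finite S \<Longrightarrow> bilinear h \<Longrightarrow> h y (\<Sum>s\<in>S. f s) = (\<Sum>s\<in>S. h y (f s))"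
  by (induction S rule: finite_induct) (auto simp: bilinear_radd bilinear_rzero)
lemma mv_sum: "finite S \<Longrightarrow> (A::real^'n^'m) *v (\<Sum>s\<in>S. f s) = (\<Sum>s\<in>S. A *v f s)"
  by (induction S rule: finite_induct) (auto simp: matrix_vector_right_distrib)

lemma ind_vec_sum: "ind_vec S = (\<Sum>s\<in>S. axis s (1::real))"
  by (simp add: vec_eq_iff ind_vec_def axis_def)

lemma u_comp:
  fixes M :: "real^'n^'n"
  assumes "bilinear b"
  shows "(matrix_inv M *v (b (ind_vec S) (axis t 1) + b (axis t 1) (ind_vec S)))$i
     = (\<Sum>s\<in>S. MB_tensor M b s t i + MB_tensor M b t s i)"
  unfolding ind_vec_sum bl_sum_l[OF finite assms] bl_sum_r[OF finite assms]
  by (simp add: matrix_vector_right_distrib mv_sum MB_tensor_def sum.distrib)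



definition newset :: "real^'n^'n \<Rightarrow> (real^'n \<Rightarrow> real^'n \<Rightarrow> real^'n) \<Rightarrow> 'n set \<Rightarrow> 'n \<Rightarrow> 'n set" where
  "newset M b S t = {i. i \<notin> S \<and> (matrix_inv M *v (b (ind_vec S) (axis t 1) + b (axis t 1) (ind_vec S)))$i > 0}"

lemma step_iff: "pos_step M b (S,T) st' \<longleftrightarrow> T \<noteq> {} \<and> S \<noteq> UNIV \<and>
   (\<exists>t\<in>T. st' = (S \<union> newset M b S t, (T - {t}) \<union> newset M b S t))"
  by (simp add: pos_step_def newset_def Let_def)

definition mu :: "'n::finite set \<times> 'n set \<Rightarrow> nat" where
  "mu st = card (- fst st) * (CARD('n) + 1) + card (snd st)"

lemma step_mu: assumes "pos_step M b st st'" shows "mu st' < mu st"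
proof -
  obtain S T where st: "st = (S,T)" by (cases st)
  obtain t where t: "t \<in> T" and st': "st' = (S \<union> newset M b S t, (T - {t}) \<union> newset M b S t)"
    using assms unfolding st step_iff by blast
  define N where "N = newset M b S t"
  have NS: "N \<inter> S = {}" unfolding N_def newset_def by auto
  show ?thesis
  proof (cases "N = {}")
    case True
    have "card (T - {t}) < card T" by (rule card_Diff1_less[OF finite t])
    thus ?thesis using True unfolding mu_def st st' N_def[symmetric] by simp
  next
    case False
    have "- (S \<union> N) \<subset> - S" using False NS by blast
    hence lt: "card (- (S \<union> N)) < card (- S)" by (rule psubset_card_mono[rotated]) simp
    have cT: "card (T - {t} \<union> N) \<le> CARD('a)" using card_mono[OF finite subset_UNIV, of "T - {t} \<union> N"] by simp
    have "card (- (S \<union> N)) * (CARD('a) + 1) + card (T - {t} \<union> N)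
        \<le> (card (- S) - 1) * (CARD('a) + 1) + CARD('a)"
      using lt cT by (intro add_mono mult_right_mono) auto
    also have "\<dots> < card (- S) * (CARD('a) + 1)"
      using lt by (cases "card (- S)") auto
    finally show ?thesis unfolding mu_def st st' N_def[symmetric] by simp
  qed
qed

lemma no_infinite_run: "\<not> (\<exists>f. f 0 = x \<and> (\<forall>k. pos_step M b (f k) (f (Suc k))))"
proof
  assume "\<exists>f. f 0 = x \<and> (\<forall>k. pos_step M b (f k) (f (Suc k)))"
  then obtain f where f: "\<And>k. pos_step M b (f k) (f (Suc k))" by blast
  have "mu (f k) + k \<le> mu (f 0)" for k
  proof (induction k)
    case (Suc k) thus ?case using step_mu[OF f[of k]] by simp
  qed simp
  from this[of "Suc (mu (f 0))"] show False by simp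
qed

definition pchain where
  "pchain M a b Ss \<longleftrightarrow> Ss \<noteq> [] \<and> Ss ! 0 = init_set M a \<and>
     (\<forall>h. Suc h < length Ss \<longrightarrow> Ss ! h \<subseteq> Ss ! Suc h) \<and>
     (\<forall>h. Suc h < length Ss \<longrightarrow>
        (\<forall>t \<in> Ss ! Suc h - Ss ! h. \<exists>r \<in> Ss ! h. \<exists>s \<in> Ss ! h. MB_tensor M b r s t > 0))"

lemma ps_chain: "positivity_showing M a b i Ss \<longleftrightarrow> pchain M a b Ss \<and> i \<in> last Ss"
  unfolding positivity_showing_def pchain_def by blast

lemma pchain_snoc:
  assumes c: "pchain M a b Ss" and sub: "last Ss \<subseteq> S'"
    and w: "\<forall>t\<in>S' - last Ss. \<exists>r\<in>last Ss. \<exists>s\<in>last Ss. MB_tensor M b r s t > 0"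
  shows "pchain M a b (Ss @ [S'])"
proof -
  have ne: "Ss \<noteq> []" using c unfolding pchain_def by blast
  have lastn: "last Ss = Ss ! (length Ss - 1)" using ne by (simp add: last_conv_nth)
  show ?thesis unfolding pchain_def
  proof (intro conjI allI impI)
    show "Ss @ [S'] \<noteq> []" by simp
    show "(Ss @ [S']) ! 0 = init_set M a" using c ne unfolding pchain_def by (simp add: nth_append)
  next
    fix h assume h: "Suc h < length (Ss @ [S'])"
    show "(Ss @ [S']) ! h \<subseteq> (Ss @ [S']) ! Suc h"
    proof (cases "Suc h < length Ss")
      case True thus ?thesis using c unfolding pchain_def by (simp add: nth_append)
    next
      case False
      hence hh: "h = length Ss - 1" "Suc h = length Ss" using h by auto
      show ?thesis using lastn sub hh by (simp add: nth_append)
    qed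
  next
    fix h assume h: "Suc h < length (Ss @ [S'])"
    show "\<forall>t\<in>(Ss @ [S']) ! Suc h - (Ss @ [S']) ! h. \<exists>r\<in>(Ss @ [S']) ! h. \<exists>s\<in>(Ss @ [S']) ! h. 0 < MB_tensor M b r s t"
    proof (cases "Suc h < length Ss")
      case True thus ?thesis using c unfolding pchain_def by (simp add: nth_append)
    next
      case False
      hence hh: "h = length Ss - 1" "Suc h = length Ss" using h by auto
      show ?thesis using lastn w hh by (simp add: nth_append)
    qed
  qed
qed



definition Inv where
  "Inv M a b st \<longleftrightarrow> snd st \<subseteq> fst st \<and> init_set M a \<subseteq> fst st \<and>
    (\<forall>r\<in>fst st. \<forall>s\<in>fst st. r \<notin> snd st \<longrightarrow> s \<notin> snd st \<longrightarrow>
        (\<forall>x. MB_tensor M b r s x > 0 \<longrightarrow> x \<in> fst st)) \<and>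
    (\<exists>Ss. pchain M a b Ss \<and> last Ss = fst st)"

lemma inv_init: "Inv M a b (init_set M a, init_set M a)"
  unfolding Inv_def by (auto intro!: exI[of _ "[init_set M a]"] simp: pchain_def)

lemma inv_step:
  fixes M :: "real^'n^'n"
  assumes bl: "bilinear b" and nn: "\<And>r s x. MB_tensor M b r s x \<ge> 0"
    and inv: "Inv M a b st" and stp: "pos_step M b st st'"
  shows "Inv M a b st'"
proof -
  obtain S T where st: "st = (S,T)" by (cases st)
  have "T \<noteq> {} \<and> S \<noteq> UNIV \<and> (\<exists>t\<in>T. st' = (S \<union> newset M b S t, (T - {t}) \<union> newset M b S t))"
    using stp unfolding st step_iff .
  then obtain t where t: "t \<in> T" and st': "st' = (S \<union> newset M b S t, (T - {t}) \<union> newset M b S t)"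
    by blast
  define N where "N = newset M b S t"
  have inv': "T \<subseteq> S \<and> init_set M a \<subseteq> S \<and>
    (\<forall>r\<in>S. \<forall>s\<in>S. r \<notin> T \<longrightarrow> s \<notin> T \<longrightarrow> (\<forall>x. MB_tensor M b r s x > 0 \<longrightarrow> x \<in> S)) \<and>
    (\<exists>Ss. pchain M a b Ss \<and> last Ss = S)"
    using inv unfolding Inv_def st fst_conv snd_conv .
  have TS: "T \<subseteq> S" and IS: "init_set M a \<subseteq> S" using inv' by simp_all
  have cl: "\<And>r s x. r \<in> S \<Longrightarrow> s \<in> S \<Longrightarrow> r \<notin> T \<Longrightarrow> s \<notin> T \<Longrightarrow> MB_tensor M b r s x > 0 \<Longrightarrow> x \<in> S"
    using inv' by blast
  obtain Ss where Ss: "pchain M a b Ss" "last Ss = S" using inv' by blast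
  have tS: "t \<in> S" using t TS by blast
  define U where "U x = (\<Sum>s\<in>S. MB_tensor M b s t x + MB_tensor M b t s x)" for x
  have Nchar: "x \<in> N \<longleftrightarrow> x \<notin> S \<and> U x > 0" for x
    unfolding N_def newset_def U_def u_comp[OF bl] by simp
  have posin: "U x > 0 \<Longrightarrow> x \<in> S \<union> N" for x using Nchar by blast
  have termle: "MB_tensor M b s t x + MB_tensor M b t s x \<le> U x" if "s \<in> S" for s x
    unfolding U_def using that
    by (intro member_le_sum[where f="\<lambda>s. MB_tensor M b s t x + MB_tensor M b t s x"])
       (auto intro: add_nonneg_nonneg nn)
  have wit: "\<exists>r\<in>S. \<exists>s\<in>S. MB_tensor M b r s x > 0" if "x \<in> N" for x
  proof (rule ccontr)
    assume "\<not> ?thesis"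
    hence "\<And>r s. r \<in> S \<Longrightarrow> s \<in> S \<Longrightarrow> MB_tensor M b r s x \<le> 0" by (meson not_less)
    hence "U x \<le> 0" unfolding U_def using tS by (intro sum_nonpos) (simp add: add_nonpos_nonpos)
    thus False using that Nchar by simp
  qed
  show ?thesis unfolding Inv_def st' N_def[symmetric] fst_conv snd_conv
  proof (intro conjI)
    show "T - {t} \<union> N \<subseteq> S \<union> N" using TS by blast
    show "init_set M a \<subseteq> S \<union> N" using IS by blast
    show "\<exists>Ss. pchain M a b Ss \<and> last Ss = S \<union> N"
    proof (intro exI conjI)
      show "pchain M a b (Ss @ [S \<union> N])"
        by (rule pchain_snoc[OF Ss(1)]) (use Ss(2) wit in auto)
    qed simp
    show "\<forall>r\<in>S \<union> N. \<forall>s\<in>S \<union> N. r \<notin> T - {t} \<union> N \<longrightarrow> s \<notin> T - {t} \<union> N \<longrightarrow>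
        (\<forall>x. 0 < MB_tensor M b r s x \<longrightarrow> x \<in> S \<union> N)"
    proof (intro ballI impI allI)
      fix r s x
      assume r: "r \<in> S \<union> N" and s: "s \<in> S \<union> N" and rT: "r \<notin> T - {t} \<union> N"
        and sT: "s \<notin> T - {t} \<union> N" and pos: "0 < MB_tensor M b r s x"
      have rS: "r \<in> S" and sS: "s \<in> S" using r s rT sT by auto
      show "x \<in> S \<union> N"
      proof (cases "r = t")
        case True
        have "MB_tensor M b s t x + MB_tensor M b t s x \<le> U x" by (rule termle[OF sS])
        moreover have "MB_tensor M b s t x \<ge> 0" by (rule nn)
        ultimately have "U x > 0" using pos unfolding True by linarith
        thus ?thesis by (rule posin)
      next
        case rt: False
        show ?thesis
        proof (cases "s = t")
          case True
          have "MB_tensor M b r t x + MB_tensor M b t r x \<le> U x" by (rule termle[OF rS])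
          moreover have "MB_tensor M b t r x \<ge> 0" by (rule nn)
          ultimately have "U x > 0" using pos unfolding True by linarith
          thus ?thesis by (rule posin)
        next
          case False
          have "r \<notin> T" "s \<notin> T" using rT sT rt False by auto
          thus ?thesis using cl[OF rS sS _ _ pos] by blast
        qed
      qed
    qed
  qed
qed



theorem mainTheorem15:
  fixes M :: "real^'n^'n" and a :: "real^'n" and b :: "real^'n \<Rightarrow> real^'n \<Rightarrow> real^'n"
  assumes "nonsingular_M_matrix M"
    and "nonneg_vec a"
    and "bilinear b"
    and "\<And>x y. nonneg_vec x \<Longrightarrow> nonneg_vec y \<Longrightarrow> nonneg_vec (b x y)"
  shows "\<not> (\<exists>f. f 0 = (init_set M a, init_set M a) \<and> (\<forall>k. pos_step M b (f k) (f (Suc k))))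
    \<and> (\<forall>st. (pos_step M b)\<^sup>*\<^sup>* (init_set M a, init_set M a) st \<and> pos_halted st \<longrightarrow>
          (\<forall>i. i \<in> fst st \<longleftrightarrow> (\<exists>Ss. positivity_showing M a b i Ss)))"
proof (intro conjI allI impI)
  show "\<not> (\<exists>f. f 0 = (init_set M a, init_set M a) \<and> (\<forall>k. pos_step M b (f k) (f (Suc k))))"
    by (rule no_infinite_run)
  have pr: "pres (matrix_inv M)" by (rule inv_nonneg[OF assms(1)])
  have ax: "nonneg_vec (axis r (1::real))" for r :: 'n unfolding nonneg_vec_def axis_def by simp
  have nn: "MB_tensor M b r s x \<ge> 0" for r s x
    using pr assms(4)[OF ax ax] unfolding pres_def MB_tensor_def nonneg_vec_def by blast
  fix st i
  assume H: "(pos_step M b)\<^sup>*\<^sup>* (init_set M a, init_set M a) st \<and> pos_halted st"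
  have inv: "Inv M a b st" using H[THEN conjunct1]
  proof (induction rule: rtranclp_induct)
    case base show ?case by (rule inv_init)
  next
    case (step y z) thus ?case using inv_step[OF assms(3) nn] by blast
  qed
  obtain S T where st: "st = (S,T)" by (cases st)
  have inv': "T \<subseteq> S \<and> init_set M a \<subseteq> S \<and>
    (\<forall>r\<in>S. \<forall>s\<in>S. r \<notin> T \<longrightarrow> s \<notin> T \<longrightarrow> (\<forall>x. MB_tensor M b r s x > 0 \<longrightarrow> x \<in> S)) \<and>
    (\<exists>Ss. pchain M a b Ss \<and> last Ss = S)"
    using inv unfolding Inv_def st fst_conv snd_conv .
  have IS: "init_set M a \<subseteq> S" using inv' by simp
  have cl: "\<And>r s x. r \<in> S \<Longrightarrow> s \<in> S \<Longrightarrow> r \<notin> T \<Longrightarrow> s \<notin> T \<Longrightarrow> MB_tensor M b r s x > 0 \<Longrightarrow> x \<in> S"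
    using inv' by blast
  obtain Ss0 where Ss0: "pchain M a b Ss0" "last Ss0 = S" using inv' by blast
  have "pos_halted st" using H by blast
  hence halt: "T = {} \<or> S = UNIV" unfolding pos_halted_def st by simp
  show "i \<in> fst st \<longleftrightarrow> (\<exists>Ss. positivity_showing M a b i Ss)"
  proof
    assume "i \<in> fst st"
    thus "\<exists>Ss. positivity_showing M a b i Ss" using Ss0 unfolding ps_chain st by auto
  next
    assume "\<exists>Ss. positivity_showing M a b i Ss"
    then obtain Ss where c: "pchain M a b Ss" and iS: "i \<in> last Ss" unfolding ps_chain by blast
    show "i \<in> fst st"
    proof (cases "S = UNIV")
      case True thus ?thesis unfolding st by simp
    next
      case False
      hence T0: "T = {}" using halt by blast
      have sub: "h < length Ss \<Longrightarrow> Ss ! h \<subseteq> S" for h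
      proof (induction h)
        case 0
      have "Ss ! 0 = init_set M a" using c unfolding pchain_def by blast
      thus ?case using IS by simp
      next
        case (Suc h)
        hence IH: "Ss ! h \<subseteq> S" by simp
        show ?case
        proof
          fix x assume x: "x \<in> Ss ! Suc h"
          show "x \<in> S"
          proof (cases "x \<in> Ss ! h")
            case True thus ?thesis using IH by blast
          next
            case False
            have cw: "\<forall>h. Suc h < length Ss \<longrightarrow>
              (\<forall>t \<in> Ss ! Suc h - Ss ! h. \<exists>r \<in> Ss ! h. \<exists>s \<in> Ss ! h. MB_tensor M b r s t > 0)"
              using c unfolding pchain_def by blast
            have "x \<in> Ss ! Suc h - Ss ! h" using x False by blast
            then obtain r s where rs: "r \<in> Ss ! h" "s \<in> Ss ! h" "MB_tensor M b r s x > 0"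
              using cw Suc.prems by blast
            show ?thesis by (rule cl) (use rs IH T0 in auto)
          qed
        qed
      qed
      have ne: "Ss \<noteq> []" using c unfolding pchain_def by blast
      have "last Ss \<subseteq> S" using sub[of "length Ss - 1"] ne by (simp add: last_conv_nth)
      thus ?thesis using iS unfolding st by auto
    qed
  qed
qed


end
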